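(* Let $\mathcal{S}=(Q,E,\delta,Q_0,\Sigma,\ell)$ be a labeled finite-state automaton, $Q_S\subset Q$ a set of secret states, and $K$ a positive integer with $K>2^{|Q\setminus Q_S|}-2$. Then $\mathcal{S}$ is strongly infinite-step opaque with respect to $Q_S$ if and only if $\mathcal{S}$ is strongly $K$-step opaque with respect to $Q_S$.
   Context: A labeled finite-state automaton is $\mathcal{S}=(Q,E,\delta,Q_0,\Sigma,\ell)$ with finite state set $Q$, finite event alphabet $E$, transition relation $\delta\subset Q\times E\times Q$, initial states $Q_0\subset Q$, finite output alphabet $\Sigma$, and labeling $\ell:E\to\Sigma\cup\{\epsilon\}$ ($\epsilon$ the empty word), extended morphically to event words. A run $q\xrightarrow{s}q'$ ($s\in E^*$) is a sequence of transitions from $q$ to $q'$ reading $s$. A run is non-secret if none of its states (including first and last) lies in $Q_S$. Strong infinite-step opacity: $\mathcal{S}$ is strongly infinite-step opaque w.r.t. $Q_S$ if for every run $q_0\xrightarrow{s_1}q_1\xrightarrow{s_2}q_2$ with $q_0\in Q_0$ and $q_1\in Q_S$ there is a non-secret run $q_0'\xrightarrow{s_1'}q_1'\xrightarrow{s_2'}q_2'$ with $q_0'\in Q_0$, $\ell(s_1)=\ell(s_1')$, $\ell(s_2)=\ell(s_2')$. Strong $K$-step opacity ($K$ a positive integer): the same requirement imposed only on runs with $|\ell(s_2)|\le K$. *)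

theory Defs
  imports Main
begin

text \<open>A labeled finite-state automaton (Q, E, delta, Q0, Sig, ell).
  The empty word epsilon as a label is encoded by None: ell :: 'e => 's option.\<close>

definition lfsa ::
  "'q set \<Rightarrow> 'e set \<Rightarrow> ('q \<times> 'e \<times> 'q) set \<Rightarrow> 'q set \<Rightarrow> 's set \<Rightarrow> ('e \<Rightarrow> 's option) \<Rightarrow> bool" where
  "lfsa Q E delta Q0 Sig ell \<longleftrightarrow>
     finite Q \<and> finite E \<and> finite Sig \<and> delta \<subseteq> Q \<times> E \<times> Q \<and> Q0 \<subseteq> Q \<and>
     (\<forall>e\<in>E. ell e = None \<or> the (ell e) \<in> Sig)"

definition lab :: "('e \<Rightarrow> 's option) \<Rightarrow> 'e list \<Rightarrow> 's list" where
  "lab ell s = concat (map (\<lambda>e. case ell e of None \<Rightarrow> [] | Some a \<Rightarrow> [a]) s)"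

definition run_states :: "('q \<times> 'e \<times> 'q) set \<Rightarrow> 'q list \<Rightarrow> 'q \<Rightarrow> 'e list \<Rightarrow> 'q \<Rightarrow> bool" where
  "run_states delta qs q s q' \<longleftrightarrow>
     length qs = Suc (length s) \<and> hd qs = q \<and> last qs = q' \<and>
     (\<forall>i<length s. (qs ! i, s ! i, qs ! Suc i) \<in> delta)"

definition run :: "('q \<times> 'e \<times> 'q) set \<Rightarrow> 'q \<Rightarrow> 'e list \<Rightarrow> 'q \<Rightarrow> bool" where
  "run delta q s q' \<longleftrightarrow> (\<exists>qs. run_states delta qs q s q')"

definition nonsecret_run :: "('q \<times> 'e \<times> 'q) set \<Rightarrow> 'q set \<Rightarrow> 'q \<Rightarrow> 'e list \<Rightarrow> 'q \<Rightarrow> bool" where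
  "nonsecret_run delta QS q s q' \<longleftrightarrow> (\<exists>qs. run_states delta qs q s q' \<and> set qs \<inter> QS = {})"

definition strong_inf_step_opaque ::
  "('q \<times> 'e \<times> 'q) set \<Rightarrow> 'q set \<Rightarrow> ('e \<Rightarrow> 's option) \<Rightarrow> 'q set \<Rightarrow> bool" where
  "strong_inf_step_opaque delta Q0 ell QS \<longleftrightarrow>
    (\<forall>q0 s1 q1 s2 q2. q0 \<in> Q0 \<and> q1 \<in> QS \<and> run delta q0 s1 q1 \<and> run delta q1 s2 q2 \<longrightarrow>
      (\<exists>q0' s1' q1' s2' q2'. q0' \<in> Q0 \<and> nonsecret_run delta QS q0' s1' q1' \<and>
         nonsecret_run delta QS q1' s2' q2' \<and> lab ell s1 = lab ell s1' \<and> lab ell s2 = lab ell s2'))"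

definition strong_K_step_opaque ::
  "('q \<times> 'e \<times> 'q) set \<Rightarrow> 'q set \<Rightarrow> ('e \<Rightarrow> 's option) \<Rightarrow> 'q set \<Rightarrow> nat \<Rightarrow> bool" where
  "strong_K_step_opaque delta Q0 ell QS K \<longleftrightarrow>
    (\<forall>q0 s1 q1 s2 q2. q0 \<in> Q0 \<and> q1 \<in> QS \<and> run delta q0 s1 q1 \<and> run delta q1 s2 q2 \<and>
        length (lab ell s2) \<le> K \<longrightarrow>
      (\<exists>q0' s1' q1' s2' q2'. q0' \<in> Q0 \<and> nonsecret_run delta QS q0' s1' q1' \<and>
         nonsecret_run delta QS q1' s2' q2' \<and> lab ell s1 = lab ell s1' \<and> lab ell s2 = lab ell s2'))"

end

theory Submission imports Defs begin

lemma rs_Nil[simp]: "run_states d qs p [] r \<longleftrightarrow> qs = [p] \<and> r = p"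
  unfolding run_states_def by (cases qs) auto

lemma rs_Cons[simp]: "run_states d qs p (e#s) r \<longleftrightarrow>
   (\<exists>qs'. qs = p # qs' \<and> (p, e, hd qs') \<in> d \<and> run_states d qs' (hd qs') s r)"
proof
  assume H: "run_states d qs p (e#s) r"
  then obtain qs' where qs: "qs = p # qs'" unfolding run_states_def by (cases qs) auto
  have ne: "qs' \<noteq> []" using H qs unfolding run_states_def by auto
  have t0: "(p, e, hd qs') \<in> d" using H qs ne unfolding run_states_def
    by (metis hd_conv_nth length_Cons nth_Cons_0 nth_Cons_Suc zero_less_Suc)
  have "run_states d qs' (hd qs') s r"
  proof -
    have "\<forall>i<length s. (qs' ! i, s ! i, qs' ! Suc i) \<in> d"
    proof (intro allI impI)
      fix i assume "i < length s"
      then have "(qs ! Suc i, (e#s) ! Suc i, qs ! Suc (Suc i)) \<in> d" using H unfolding run_states_def by auto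
      then show "(qs' ! i, s ! i, qs' ! Suc i) \<in> d" using qs by simp
    qed
    then show ?thesis using H qs ne unfolding run_states_def by auto
  qed
  then show "\<exists>qs'. qs = p # qs' \<and> (p, e, hd qs') \<in> d \<and> run_states d qs' (hd qs') s r"
    using qs t0 by blast
next
  assume "\<exists>qs'. qs = p # qs' \<and> (p, e, hd qs') \<in> d \<and> run_states d qs' (hd qs') s r"
  then obtain qs' where qs: "qs = p # qs'" and t0: "(p, e, hd qs') \<in> d"
    and R: "run_states d qs' (hd qs') s r" by blast
  have ne: "qs' \<noteq> []" using R unfolding run_states_def by auto
  show "run_states d qs p (e#s) r" unfolding run_states_def
  proof (intro conjI allI impI)
    fix i assume "i < length (e#s)"
    then show "(qs ! i, (e # s) ! i, qs ! Suc i) \<in> d"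
      using R t0 qs ne unfolding run_states_def
      by (cases i) (auto simp: hd_conv_nth)
  qed (use R qs ne in \<open>auto simp: run_states_def\<close>)
qed

lemma rs_append:
  "run_states d qs p s r \<Longrightarrow> run_states d qs' r t u \<Longrightarrow> run_states d (qs @ tl qs') p (s@t) u"
proof (induction s arbitrary: qs p)
  case Nil
  then show ?case by (cases t) auto
next
  case (Cons e s)
  then obtain qs1 where "qs = p # qs1" "(p, e, hd qs1) \<in> d" "run_states d qs1 (hd qs1) s r" by auto
  moreover have "qs1 \<noteq> []" using calculation(3) unfolding run_states_def by auto
  ultimately show ?case using Cons.IH[of qs1 "hd qs1"] Cons.prems(2) by auto
qed

lemma rs_split:
  "run_states d qs p s r \<Longrightarrow> j \<le> length s \<Longrightarrow>
    run_states d (take (Suc j) qs) p (take j s) (qs!j) \<and> run_states d (drop j qs) (qs!j) (drop j s) r"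
proof (induction s arbitrary: qs p j)
  case Nil
  then show ?case by auto
next
  case (Cons e s)
  then obtain qs1 where A: "qs = p # qs1" "(p, e, hd qs1) \<in> d" "run_states d qs1 (hd qs1) s r" by auto
  have ne: "qs1 \<noteq> []" using A(3) unfolding run_states_def by auto
  show ?case
  proof (cases j)
    case 0
    then show ?thesis using A ne Cons.prems by auto
  next
    case (Suc j')
    then show ?thesis using A ne Cons.prems Cons.IH[of qs1 "hd qs1" j'] by auto
  qed
qed

lemma rs_last_in:
  assumes "run_states d qs p s r" "p \<in> Q" "d \<subseteq> Q \<times> E \<times> Q"
  shows "r \<in> Q"
  using assms
proof (induction s arbitrary: qs p)
  case Nil then show ?case by auto
next
  case (Cons e s)
  then obtain qs1 where A: "qs = p # qs1" "(p, e, hd qs1) \<in> d" "run_states d qs1 (hd qs1) s r" by auto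
  then have "hd qs1 \<in> Q" using Cons.prems by auto
  then show ?case using Cons.IH A Cons.prems by blast
qed

lemma rs_set: "run_states d qs p s r \<Longrightarrow> set qs = {qs ! k | k. k \<le> length s}"
  unfolding run_states_def by (auto simp: set_conv_nth less_Suc_eq_le)

lemma lab_append[simp]: "lab ell (a @ b) = lab ell a @ lab ell b"
  unfolding lab_def by simp

lemma lab_split: "lab ell s = u @ w \<Longrightarrow> \<exists>j\<le>length s. lab ell (take j s) = u \<and> lab ell (drop j s) = w"
proof (induction s arbitrary: u)
  case Nil then show ?case by (auto simp: lab_def)
next
  case (Cons e s)
  show ?case
  proof (cases u)
    case Nil
    then show ?thesis using Cons.prems by (intro exI[of _ 0]) (auto simp: lab_def)
  next
    case (Cons a u')
    show ?thesis
    proof (cases "ell e")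
      case None
      then have "lab ell s = u @ w" using Cons.prems by (simp add: lab_def)
      then obtain j where "j \<le> length s" "lab ell (take j s) = u" "lab ell (drop j s) = w"
        using Cons.IH by blast
      then show ?thesis using None by (intro exI[of _ "Suc j"]) (simp add: lab_def)
    next
      case (Some b)
      then have "b = a" "lab ell s = u' @ w" using Cons.prems \<open>u = a # u'\<close> by (auto simp: lab_def)
      then obtain j where "j \<le> length s" "lab ell (take j s) = u'" "lab ell (drop j s) = w"
        using Cons.IH by blast
      then show ?thesis using Some \<open>b = a\<close> \<open>u = a # u'\<close> by (intro exI[of _ "Suc j"]) (simp add: lab_def)
    qed
  qed
qed


definition NR where "NR d QS ell p w q \<longleftrightarrow> (\<exists>s. nonsecret_run d QS p s q \<and> lab ell s = w)"
definition Gs where "Gs d Q0 ell QS w \<longleftrightarrow> (\<exists>q0\<in>Q0. \<exists>q. NR d QS ell q0 w q)"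
definition CE where "CE d Q0 ell QS s1 s2 \<longleftrightarrow> (\<exists>q0 q1 q2. q0\<in>Q0 \<and> q1\<in>QS \<and> run d q0 s1 q1 \<and>
   run d q1 s2 q2 \<and> \<not> Gs d Q0 ell QS (lab ell s1 @ lab ell s2))"

lemma nsr_append: "nonsecret_run d QS p s r \<Longrightarrow> nonsecret_run d QS r t u \<Longrightarrow> nonsecret_run d QS p (s@t) u"
  unfolding nonsecret_run_def
proof (elim exE conjE)
  fix qs qs' assume A: "run_states d qs p s r" "set qs \<inter> QS = {}" "run_states d qs' r t u" "set qs' \<inter> QS = {}"
  have "set (tl qs') \<subseteq> set qs'" by (cases qs') auto
  then show "\<exists>qs. run_states d qs p (s @ t) u \<and> set qs \<inter> QS = {}"
    using A rs_append[OF A(1) A(3)] by (intro exI[of _ "qs @ tl qs'"]) auto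
qed

lemma nsr_split: "nonsecret_run d QS p s r \<Longrightarrow> j \<le> length s \<Longrightarrow>
   \<exists>x. nonsecret_run d QS p (take j s) x \<and> nonsecret_run d QS x (drop j s) r"
proof -
  assume H: "nonsecret_run d QS p s r" and J: "j \<le> length s"
  then obtain qs where A: "run_states d qs p s r" "set qs \<inter> QS = {}" unfolding nonsecret_run_def by blast
  note B = rs_split[OF A(1) J]
  have "set (take (Suc j) qs) \<subseteq> set qs" "set (drop j qs) \<subseteq> set qs"
    by (auto dest: in_set_takeD in_set_dropD)
  then show ?thesis unfolding nonsecret_run_def using A B by blast
qed

lemma NR_append: "NR d QS ell p u x \<Longrightarrow> NR d QS ell x w q \<Longrightarrow> NR d QS ell p (u@w) q"
  unfolding NR_def using nsr_append by fastforce

lemma NR_split: "NR d QS ell p (u@w) q \<Longrightarrow> \<exists>x. NR d QS ell p u x \<and> NR d QS ell x w q"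
proof -
  assume "NR d QS ell p (u@w) q"
  then obtain s where A: "nonsecret_run d QS p s q" "lab ell s = u @ w" unfolding NR_def by blast
  obtain j where j: "j \<le> length s" "lab ell (take j s) = u" "lab ell (drop j s) = w"
    using lab_split[OF A(2)] by blast
  then show ?thesis unfolding NR_def using nsr_split[OF A(1) j(1)] by blast
qed

lemma NR_hd: "NR d QS ell p w q \<Longrightarrow> p \<notin> QS"
  unfolding NR_def nonsecret_run_def run_states_def
  by (metis disjoint_iff hd_in_set length_0_conv nat.distinct(1))

lemma NR_in_Q: "NR d QS ell p w q \<Longrightarrow> p \<in> Q \<Longrightarrow> d \<subseteq> Q \<times> E \<times> Q \<Longrightarrow> q \<in> Q"
  unfolding NR_def nonsecret_run_def using rs_last_in by metis

lemma G_iff: "(\<exists>q0' s1' q1' s2' q2'. q0' \<in> Q0 \<and> nonsecret_run d QS q0' s1' q1' \<and>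
         nonsecret_run d QS q1' s2' q2' \<and> w1 = lab ell s1' \<and> w2 = lab ell s2') \<longleftrightarrow> Gs d Q0 ell QS (w1 @ w2)"
proof
  assume "\<exists>q0' s1' q1' s2' q2'. q0' \<in> Q0 \<and> nonsecret_run d QS q0' s1' q1' \<and>
         nonsecret_run d QS q1' s2' q2' \<and> w1 = lab ell s1' \<and> w2 = lab ell s2'"
  then show "Gs d Q0 ell QS (w1 @ w2)" unfolding Gs_def
    by (metis NR_def NR_append)
next
  assume "Gs d Q0 ell QS (w1 @ w2)"
  then obtain q0 q where "q0 \<in> Q0" "NR d QS ell q0 (w1@w2) q" unfolding Gs_def by blast
  then show "\<exists>q0' s1' q1' s2' q2'. q0' \<in> Q0 \<and> nonsecret_run d QS q0' s1' q1' \<and>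
         nonsecret_run d QS q1' s2' q2' \<and> w1 = lab ell s1' \<and> w2 = lab ell s2'"
    using NR_split unfolding NR_def by metis
qed

lemma inf_iff: "strong_inf_step_opaque d Q0 ell QS \<longleftrightarrow> \<not> (\<exists>s1 s2. CE d Q0 ell QS s1 s2)"
  unfolding strong_inf_step_opaque_def CE_def G_iff[symmetric] run_def by blast

lemma K_iff: "strong_K_step_opaque d Q0 ell QS K \<longleftrightarrow> \<not> (\<exists>s1 s2. CE d Q0 ell QS s1 s2 \<and> length (lab ell s2) \<le> K)"
  unfolding strong_K_step_opaque_def CE_def G_iff[symmetric] run_def by blast


lemma main_min:
  assumes dQ: "d \<subseteq> Q \<times> E \<times> Q" and Q0Q: "Q0 \<subseteq> Q" and fin: "finite Q"
    and ce: "CE d Q0 ell QS s1 s2"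
    and mn: "\<And>s1' s2'. CE d Q0 ell QS s1' s2' \<Longrightarrow> length (lab ell s2) \<le> length (lab ell s2')"
  shows "length (lab ell s2) \<le> 2 ^ card (Q - QS) - 1"
proof (rule ccontr)
  assume big: "\<not> length (lab ell s2) \<le> 2 ^ card (Q - QS) - 1"
  obtain q0 q1 q2 qs1 qs2 where q0: "q0 \<in> Q0" and q1: "q1 \<in> QS"
    and R1: "run_states d qs1 q0 s1 q1" and R2: "run_states d qs2 q1 s2 q2"
    and nG: "\<not> Gs d Q0 ell QS (lab ell s1 @ lab ell s2)"
    using ce unfolding CE_def run_def by blast
  define v where "v = lab ell s2"
  define m where "m = length v"
  have claimA: "qs2 ! k \<notin> QS" if k: "k \<le> length s2" "lab ell (take k s2) \<noteq> []" for k
  proof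
    assume sec: "qs2 ! k \<in> QS"
    note B = rs_split[OF R2 k(1)]
    have "run_states d (qs1 @ tl (take (Suc k) qs2)) q0 (s1 @ take k s2) (qs2 ! k)"
      using rs_append[OF R1] B by blast
    moreover have "lab ell (s1 @ take k s2) @ lab ell (drop k s2) = lab ell s1 @ lab ell s2"
      by (metis append_assoc append_take_drop_id lab_append)
    ultimately have "CE d Q0 ell QS (s1 @ take k s2) (drop k s2)"
      unfolding CE_def run_def using q0 sec B nG by auto
    then have "length (lab ell s2) \<le> length (lab ell (drop k s2))" by (rule mn)
    moreover have "lab ell s2 = lab ell (take k s2) @ lab ell (drop k s2)"
      by (metis append_take_drop_id lab_append)
    ultimately show False using k(2) by simp
  qed
  have claimP: "\<exists>j x. run d q1 (take j s2) x \<and> lab ell (take j s2) = take i v \<and> x \<in> Q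
       \<and> NR d QS ell x (drop i v) q2" if i: "1 \<le> i" "i \<le> m" for i
  proof -
    have "lab ell s2 = take i v @ drop i v" unfolding v_def by simp
    then obtain j where j: "j \<le> length s2" "lab ell (take j s2) = take i v" "lab ell (drop j s2) = drop i v"
      using lab_split by blast
    have ne: "take i v \<noteq> []" using i unfolding m_def by auto
    note B = rs_split[OF R2 j(1)]
    have "run_states d (qs1 @ tl (take (Suc j) qs2)) q0 (s1 @ take j s2) (qs2 ! j)"
      using rs_append[OF R1] B by blast
    then have xQ: "qs2 ! j \<in> Q" using rs_last_in[OF _ _ dQ] q0 Q0Q by blast
    have "set (drop j qs2) \<inter> QS = {}"
    proof (rule ccontr)
      assume "set (drop j qs2) \<inter> QS \<noteq> {}"
      then obtain y where y: "y \<in> set (drop j qs2)" "y \<in> QS" by blast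
      then obtain t where t: "t < length (drop j qs2)" "y = drop j qs2 ! t" by (metis in_set_conv_nth)
      have len: "length qs2 = Suc (length s2)" using R2 unfolding run_states_def by simp
      have yk: "y = qs2 ! (j + t)" using t j len by simp
      have kle: "j + t \<le> length s2" using t len by simp
      have "take (j + t) s2 = take j s2 @ take t (drop j s2)" by (simp add: take_add)
      then have "lab ell (take (j + t) s2) \<noteq> []" using j(2) ne by simp
      then show False using claimA[OF kle] yk y(2) by simp
    qed
    then have "NR d QS ell (qs2 ! j) (drop i v) q2"
      unfolding NR_def nonsecret_run_def using B j(3) by blast
    then show ?thesis using B xQ j(2) unfolding run_def by blast
  qed
  define Bs where "Bs i = {x \<in> Q. \<exists>q. NR d QS ell x (drop i v) q}" for i
  have sub: "Bs ` {1..m} \<subseteq> Pow (Q - QS) - {{}}"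
  proof
    fix X assume "X \<in> Bs ` {1..m}"
    then obtain i where i: "1 \<le> i" "i \<le> m" "X = Bs i" by auto
    obtain j x where jx: "x \<in> Q" "NR d QS ell x (drop i v) q2" using claimP[OF i(1,2)] by blast
    then have "x \<in> Bs i" unfolding Bs_def by blast
    then have "X \<noteq> {}" using i(3) by blast
    moreover have "X \<subseteq> Q - QS" using i(3) unfolding Bs_def by (auto dest: NR_hd)
    ultimately show "X \<in> Pow (Q - QS) - {{}}" by blast
  qed
  have "card (Pow (Q - QS) - {{}}) = 2 ^ card (Q - QS) - 1"
    using fin by (simp add: card_Pow)
  moreover have "finite (Pow (Q - QS) - {{}})" using fin by simp
  ultimately have cB: "card (Bs ` {1..m}) \<le> 2 ^ card (Q - QS) - 1"
    using sub card_mono by metis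
  have "\<not> inj_on Bs {1..m}"
  proof
    assume "inj_on Bs {1..m}"
    then have "card (Bs ` {1..m}) = m" by (simp add: card_image)
    then show False using cB big unfolding m_def v_def by simp
  qed
  then obtain i j where ij: "i \<in> {1..m}" "j \<in> {1..m}" "i < j" "Bs i = Bs j"
    unfolding inj_on_def by (metis linorder_neqE_nat)
  obtain j' x where P: "run d q1 (take j' s2) x" "lab ell (take j' s2) = take i v" "x \<in> Q"
     "NR d QS ell x (drop i v) q2" using claimP ij(1) by force
  then have "x \<in> Bs j" using ij(4) unfolding Bs_def by blast
  then obtain q t where T: "nonsecret_run d QS x t q" "lab ell t = drop j v"
    unfolding Bs_def NR_def by blast
  have run2: "run d q1 (take j' s2 @ t) q"
    using P(1) T(1) unfolding run_def nonsecret_run_def by (blast intro: rs_append)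
  have nG2: "\<not> Gs d Q0 ell QS (lab ell s1 @ lab ell (take j' s2 @ t))"
  proof
    assume "Gs d Q0 ell QS (lab ell s1 @ lab ell (take j' s2 @ t))"
    then obtain q0' q' where g: "q0' \<in> Q0" "NR d QS ell q0' ((lab ell s1 @ take i v) @ drop j v) q'"
      unfolding Gs_def using P(2) T(2) by auto
    then obtain y where y: "NR d QS ell q0' (lab ell s1 @ take i v) y" "NR d QS ell y (drop j v) q'"
      using NR_split[OF g(2)] by blast
    have "y \<in> Q" using NR_in_Q[OF y(1) _ dQ] g(1) Q0Q by blast
    then have "y \<in> Bs i" using ij(4) y(2) unfolding Bs_def by blast
    then obtain q'' where "NR d QS ell y (drop i v) q''" unfolding Bs_def by blast
    then have "NR d QS ell q0' ((lab ell s1 @ take i v) @ drop i v) q''" by (rule NR_append[OF y(1)])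
    then have "Gs d Q0 ell QS (lab ell s1 @ lab ell s2)" unfolding Gs_def v_def using g(1) by auto
    then show False using nG by blast
  qed
  have "CE d Q0 ell QS s1 (take j' s2 @ t)"
    unfolding CE_def using q0 q1 R1 run2 nG2 unfolding run_def by blast
  then have "length (lab ell s2) \<le> length (lab ell (take j' s2 @ t))" by (rule mn)
  moreover have "length (lab ell (take j' s2 @ t)) = i + (m - j)"
    using P(2) T(2) ij unfolding m_def by auto
  ultimately show False using ij unfolding m_def v_def by auto
qed


theorem corollary4:
  fixes Q :: "'q set" and E :: "'e set" and delta :: "('q \<times> 'e \<times> 'q) set"
    and Q0 :: "'q set" and Sig :: "'s set" and ell :: "'e \<Rightarrow> 's option"
    and QS :: "'q set" and K :: nat
  assumes "lfsa Q E delta Q0 Sig ell"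
    and "QS \<subseteq> Q"
    and "K > 0"
    and "int K > 2 ^ card (Q - QS) - 2"
  shows "strong_inf_step_opaque delta Q0 ell QS \<longleftrightarrow> strong_K_step_opaque delta Q0 ell QS K"
proof
  assume "strong_inf_step_opaque delta Q0 ell QS"
  then show "strong_K_step_opaque delta Q0 ell QS K"
    unfolding inf_iff K_iff by blast
next
  assume Kop: "strong_K_step_opaque delta Q0 ell QS K"
  have dQ: "delta \<subseteq> Q \<times> E \<times> Q" and Q0Q: "Q0 \<subseteq> Q" and fin: "finite Q"
    using assms(1) unfolding lfsa_def by auto
  have Kb: "2 ^ card (Q - QS) - 1 \<le> K"
  proof -
    have "int (2 ^ card (Q - QS)) \<le> int K + 1" using assms(4) by simp
    then show ?thesis by linarith
  qed
  show "strong_inf_step_opaque delta Q0 ell QS"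
  proof (rule ccontr)
    assume "\<not> strong_inf_step_opaque delta Q0 ell QS"
    then have ex: "\<exists>n s1 s2. CE delta Q0 ell QS s1 s2 \<and> length (lab ell s2) = n"
      unfolding inf_iff by blast
    then obtain n where n: "\<exists>s1 s2. CE delta Q0 ell QS s1 s2 \<and> length (lab ell s2) = n"
      and nmin: "\<And>k. k < n \<Longrightarrow> \<not> (\<exists>s1 s2. CE delta Q0 ell QS s1 s2 \<and> length (lab ell s2) = k)"
      using exists_least_iff[of "\<lambda>n. \<exists>s1 s2. CE delta Q0 ell QS s1 s2 \<and> length (lab ell s2) = n"]
      by blast
    then obtain s1 s2 where ce: "CE delta Q0 ell QS s1 s2" and ln: "length (lab ell s2) = n" by blast
    have "length (lab ell s2) \<le> 2 ^ card (Q - QS) - 1"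
    proof (rule main_min[OF dQ Q0Q fin ce])
      fix s1' s2' assume "CE delta Q0 ell QS s1' s2'"
      then show "length (lab ell s2) \<le> length (lab ell s2')"
        using nmin[of "length (lab ell s2')"] ln not_le by blast
    qed
    then have "length (lab ell s2) \<le> K" using Kb by linarith
    then show False using Kop ce unfolding K_iff by blast
  qed
qed

end
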